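(* Let $E$ be a countable set and $\mathcal{C}=\langle E,X\rangle$ a stable configuration structure. Then for every finite configuration $x\in X$, the symmetric residual $x\odot\mathcal{C}$ is stable. Consequently, $\odot$ is a (partial) group action on stable configuration structures.
   Context: A configuration structure over $E$ is a pair $\mathcal{C}=\langle E,X\rangle$ with $X\subseteq\mathcal{P}(E)$ (its configurations). For finite $x\in X$, $x\odot\mathcal{C}:=\langle E,\{y\mathbin{\triangle}x\mid y\in X\}\rangle$, where $\mathbin{\triangle}$ is symmetric difference. $\mathcal{C}$ is stable if it is: rooted ($\emptyset\in X$); connected (for all $x\in X$ with $x\neq\emptyset$ there is $a\in x$ with $x\setminus\{a\}\in X$); closed under bounded union (for all $x,y,z\in X$, $x\cup y\subseteq z$ implies $x\cup y\in X$); closed under intersection (for all $x,y\in X$, $x\cap y\in X$); coherent (for all $x,y,z\in X$, if there are $z',z'',z'''\in X$ with $x\cup y\subseteq z'$, $y\cup z\subseteq z''$, $x\cup z\subseteq z'''$, then $x\cup y\cup z\in X$). *)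

theory Defs
  imports Main "HOL-Library.Countable_Set"
begin

type_synonym 'a cs = "'a set \<times> 'a set set"

definition events :: "'a cs \<Rightarrow> 'a set" where "events C = fst C"
definition configs :: "'a cs \<Rightarrow> 'a set set" where "configs C = snd C"

definition conf_struct :: "'a cs \<Rightarrow> bool" where
  "conf_struct C \<longleftrightarrow> configs C \<subseteq> Pow (events C)"

definition sym_residual :: "'a set \<Rightarrow> 'a cs \<Rightarrow> 'a cs" (infixr "\<odot>" 70) where
  "x \<odot> C = (events C, {y - x \<union> (x - y) | y. y \<in> configs C})"

definition rooted :: "'a cs \<Rightarrow> bool" where
  "rooted C \<longleftrightarrow> {} \<in> configs C"

definition connected_cs :: "'a cs \<Rightarrow> bool" where
  "connected_cs C \<longleftrightarrow> (\<forall>x\<in>configs C. x \<noteq> {} \<longrightarrow> (\<exists>a\<in>x. x - {a} \<in> configs C))"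

definition closed_bounded_union :: "'a cs \<Rightarrow> bool" where
  "closed_bounded_union C \<longleftrightarrow>
     (\<forall>x\<in>configs C. \<forall>y\<in>configs C. \<forall>z\<in>configs C. x \<union> y \<subseteq> z \<longrightarrow> x \<union> y \<in> configs C)"

definition closed_intersection :: "'a cs \<Rightarrow> bool" where
  "closed_intersection C \<longleftrightarrow> (\<forall>x\<in>configs C. \<forall>y\<in>configs C. x \<inter> y \<in> configs C)"

definition coherent :: "'a cs \<Rightarrow> bool" where
  "coherent C \<longleftrightarrow>
     (\<forall>x\<in>configs C. \<forall>y\<in>configs C. \<forall>z\<in>configs C.
        (\<exists>z'\<in>configs C. \<exists>z''\<in>configs C. \<exists>z'''\<in>configs C.
            x \<union> y \<subseteq> z' \<and> y \<union> z \<subseteq> z'' \<and> x \<union> z \<subseteq> z''')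
        \<longrightarrow> x \<union> y \<union> z \<in> configs C)"

definition stable :: "'a cs \<Rightarrow> bool" where
  "stable C \<longleftrightarrow> rooted C \<and> connected_cs C \<and> closed_bounded_union C
                 \<and> closed_intersection C \<and> coherent C"

end

theory Submission
  imports Defs
begin

definition sdf :: "'a set \<Rightarrow> 'a set \<Rightarrow> 'a set" where
  "sdf y x = y - x \<union> (x - y)"

lemma sdf_inv[simp]: "sdf (sdf y x) x = y"
  unfolding sdf_def by auto

lemma cfg_res: "configs (x \<odot> C) = (\<lambda>y. sdf y x) ` configs C"
  by (auto simp: sym_residual_def configs_def sdf_def)

lemma ev_res: "events (x \<odot> C) = events C"
  by (simp add: sym_residual_def events_def)

lemma mem_res: "w \<in> configs (x \<odot> C) \<longleftrightarrow> sdf w x \<in> configs C"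
proof
  assume "w \<in> configs (x \<odot> C)"
  then obtain y where "y \<in> configs C" "w = sdf y x" unfolding cfg_res by blast
  then show "sdf w x \<in> configs C" by simp
next
  assume "sdf w x \<in> configs C"
  then have "sdf (sdf w x) x \<in> (\<lambda>y. sdf y x) ` configs C" by (rule imageI)
  then show "w \<in> configs (x \<odot> C)" unfolding cfg_res by simp
qed

lemma coh_use:
  assumes "coherent C" "a \<in> configs C" "b \<in> configs C" "c \<in> configs C"
    "p \<in> configs C" "q \<in> configs C" "r \<in> configs C"
    "a \<union> b \<subseteq> p" "b \<union> c \<subseteq> q" "a \<union> c \<subseteq> r"
  shows "a \<union> b \<union> c \<in> configs C"
proof -
  have "\<exists>z'\<in>configs C. \<exists>z''\<in>configs C. \<exists>z'''\<in>configs C.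
            a \<union> b \<subseteq> z' \<and> b \<union> c \<subseteq> z'' \<and> a \<union> c \<subseteq> z'''"
    using assms(5-10) by blast
  then show ?thesis using assms(1-4) unfolding coherent_def by blast
qed

lemma maj:
  assumes "stable C" "x \<in> configs C" "y \<in> configs C" "z \<in> configs C"
  shows "(x \<inter> y) \<union> (x \<inter> z) \<union> (y \<inter> z) \<in> configs C"
proof -
  have I: "\<And>a b. a \<in> configs C \<Longrightarrow> b \<in> configs C \<Longrightarrow> a \<inter> b \<in> configs C"
    using assms(1) unfolding stable_def closed_intersection_def by blast
  have Co: "coherent C" using assms(1) unfolding stable_def by blast
  have "x \<inter> y \<in> configs C" "x \<inter> z \<in> configs C" "y \<inter> z \<in> configs C"
    using I assms by auto
  moreover have "(x \<inter> y) \<union> (x \<inter> z) \<subseteq> x" "(x \<inter> z) \<union> (y \<inter> z) \<subseteq> z"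
    "(x \<inter> y) \<union> (y \<inter> z) \<subseteq> y" by auto
  ultimately show ?thesis using coh_use[OF Co _ _ _ assms(2) assms(4) assms(3)] by blast
qed

lemma res_inter:
  assumes "stable C" "x \<in> configs C" "a \<in> configs (x \<odot> C)" "b \<in> configs (x \<odot> C)"
  shows "a \<inter> b \<in> configs (x \<odot> C)"
proof -
  let ?A = "sdf a x" and ?B = "sdf b x"
  have "?A \<in> configs C" "?B \<in> configs C" using assms mem_res by blast+
  then have "(?A \<inter> ?B) \<union> (?A \<inter> x) \<union> (?B \<inter> x) \<in> configs C"
    using maj[OF assms(1)] assms(2) by blast
  moreover have "sdf (a \<inter> b) x = (?A \<inter> ?B) \<union> (?A \<inter> x) \<union> (?B \<inter> x)"
    unfolding sdf_def by auto
  ultimately show ?thesis using mem_res by metis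
qed

lemma res_bunion:
  assumes "stable C" "x \<in> configs C" "a \<in> configs (x \<odot> C)" "b \<in> configs (x \<odot> C)"
    "c \<in> configs (x \<odot> C)" "a \<union> b \<subseteq> c"
  shows "a \<union> b \<in> configs (x \<odot> C)"
proof -
  let ?A = "sdf a x" and ?B = "sdf b x" and ?W = "sdf c x"
  have X: "?A \<in> configs C" "?B \<in> configs C" "?W \<in> configs C" using assms mem_res by blast+
  have I: "\<And>a b. a \<in> configs C \<Longrightarrow> b \<in> configs C \<Longrightarrow> a \<inter> b \<in> configs C"
    using assms(1) unfolding stable_def closed_intersection_def by blast
  have Co: "coherent C" using assms(1) unfolding stable_def by blast
  have Y: "?A \<inter> ?W \<in> configs C" "?B \<inter> ?W \<in> configs C" "x \<inter> ?A \<inter> ?B \<in> configs C"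
    using I X assms(2) by auto
  have "(?A \<inter> ?W) \<union> (?B \<inter> ?W) \<subseteq> ?W" "(?B \<inter> ?W) \<union> (x \<inter> ?A \<inter> ?B) \<subseteq> ?B"
    "(?A \<inter> ?W) \<union> (x \<inter> ?A \<inter> ?B) \<subseteq> ?A" by auto
  then have "(?A \<inter> ?W) \<union> (?B \<inter> ?W) \<union> (x \<inter> ?A \<inter> ?B) \<in> configs C"
    by (rule coh_use[OF Co Y X(3) X(2) X(1)])
  moreover have "sdf (a \<union> b) x = (?A \<inter> ?W) \<union> (?B \<inter> ?W) \<union> (x \<inter> ?A \<inter> ?B)"
    using assms(6) unfolding sdf_def by blast
  ultimately show ?thesis using mem_res by metis
qed

lemma res_coh:
  assumes "stable C" "x \<in> configs C" "a \<in> configs (x \<odot> C)" "b \<in> configs (x \<odot> C)"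
    "c \<in> configs (x \<odot> C)"
    "p \<in> configs (x \<odot> C)" "q \<in> configs (x \<odot> C)" "r \<in> configs (x \<odot> C)"
    "a \<union> b \<subseteq> p" "b \<union> c \<subseteq> q" "a \<union> c \<subseteq> r"
  shows "a \<union> b \<union> c \<in> configs (x \<odot> C)"
proof -
  let ?A = "sdf a x" and ?B = "sdf b x" and ?Cc = "sdf c x"
  let ?Tab = "sdf (a \<union> b) x" and ?Tbc = "sdf (b \<union> c) x" and ?Tac = "sdf (a \<union> c) x"
  have X: "?A \<in> configs C" "?B \<in> configs C" "?Cc \<in> configs C" using assms mem_res by blast+
  have T: "?Tab \<in> configs C" "?Tbc \<in> configs C" "?Tac \<in> configs C"
    using res_bunion[OF assms(1,2)] assms mem_res by blast+
  have I: "\<And>a b. a \<in> configs C \<Longrightarrow> b \<in> configs C \<Longrightarrow> a \<inter> b \<in> configs C"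
    using assms(1) unfolding stable_def closed_intersection_def by blast
  have Co: "coherent C" using assms(1) unfolding stable_def by blast
  let ?a = "?Tab \<inter> ?Tac \<inter> ?A" and ?b = "?Tab \<inter> ?Tbc \<inter> ?B" and ?c = "?Tbc \<inter> ?Tac \<inter> ?Cc"
  have Y: "?a \<in> configs C" "?b \<in> configs C" "?c \<in> configs C" using I X T by auto
  have "?a \<union> ?b \<subseteq> ?Tab" "?b \<union> ?c \<subseteq> ?Tbc" "?a \<union> ?c \<subseteq> ?Tac" by auto
  then have "?a \<union> ?b \<union> ?c \<in> configs C" by (rule coh_use[OF Co Y T])
  moreover have "sdf (a \<union> b \<union> c) x = ?a \<union> ?b \<union> ?c"
    unfolding sdf_def by blast
  ultimately show ?thesis using mem_res by metis
qed

lemma bu_use: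
  assumes "closed_bounded_union C" "a \<in> configs C" "b \<in> configs C" "c \<in> configs C"
    "a \<union> b \<subseteq> c"
  shows "a \<union> b \<in> configs C"
  using assms unfolding closed_bounded_union_def by blast

lemma conn_use:
  assumes "connected_cs C" "z \<in> configs C" "z \<noteq> {}"
  shows "\<exists>a\<in>z. z - {a} \<in> configs C"
  using assms unfolding connected_cs_def by blast

lemma int_use:
  assumes "stable C" "a \<in> configs C" "b \<in> configs C"
  shows "a \<inter> b \<in> configs C"
  using assms unfolding stable_def closed_intersection_def by blast

lemma remove_lemma:
  assumes "stable C" "finite x" "x \<in> configs C" "x \<subseteq> y" "y \<in> configs C" "y - x \<noteq> {}"
  shows "z \<in> configs C \<Longrightarrow> z \<subseteq> y \<Longrightarrow> y - z \<subseteq> x \<Longrightarrow> \<exists>e\<in>y-x. y - {e} \<in> configs C"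
proof (induction "card (z \<inter> x)" arbitrary: z rule: less_induct)
  case less
  have Cn: "connected_cs C" and Bu: "closed_bounded_union C"
    using assms(1) unfolding stable_def by simp_all
  have "y - x \<subseteq> z" using less.prems(3) by blast
  then have "z \<noteq> {}" using assms(6) by blast
  then obtain a where a: "a \<in> z" "z - {a} \<in> configs C"
    using conn_use[OF Cn less.prems(1)] by blast
  show ?case
  proof (cases "a \<in> x")
    case False
    have "(z - {a}) \<union> x \<in> configs C"
      by (rule bu_use[OF Bu a(2) assms(3) assms(5)]) (use less.prems(2) assms(4) in blast)
    moreover have "(z - {a}) \<union> x = y - {a}" using False less.prems(2,3) assms(4) by blast
    moreover have "a \<in> y - x" using False a(1) less.prems(2) by blast
    ultimately show ?thesis by metis
  next
    case True
    have lt: "card ((z - {a}) \<inter> x) < card (z \<inter> x)"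
      using True a(1) assms(2) by (intro psubset_card_mono) auto
    show ?thesis
    proof (rule less.hyps[OF lt a(2)])
      show "z - {a} \<subseteq> y" using less.prems(2) by blast
      show "y - (z - {a}) \<subseteq> x" using less.prems(3) True by blast
    qed
  qed
qed

lemma add_lemma:
  assumes "stable C" "finite x" "x \<in> configs C" "y \<subseteq> x" "y \<in> configs C"
  shows "z \<in> configs C \<Longrightarrow> z \<subseteq> x \<Longrightarrow> \<not> z \<subseteq> y \<Longrightarrow> \<exists>e\<in>x-y. insert e y \<in> configs C"
proof (induction "card z" arbitrary: z rule: less_induct)
  case less
  have Cn: "connected_cs C" and Bu: "closed_bounded_union C"
    using assms(1) unfolding stable_def by simp_all
  have "z \<noteq> {}" using less.prems(3) by blast
  then obtain a where a: "a \<in> z" "z - {a} \<in> configs C"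
    using conn_use[OF Cn less.prems(1)] by blast
  show ?case
  proof (cases "z - {a} \<subseteq> y")
    case True
    have "y \<union> z \<in> configs C"
      by (rule bu_use[OF Bu assms(5) less.prems(1) assms(3)]) (use less.prems(2) assms(4) in blast)
    moreover have "y \<union> z = insert a y" using True a(1) by blast
    moreover have "a \<in> x - y" using True less.prems(2,3) a(1) by blast
    ultimately show ?thesis by metis
  next
    case False
    have "finite z" using less.prems(2) assms(2) finite_subset by blast
    then have lt: "card (z - {a}) < card z"
      using a(1) by (intro psubset_card_mono) auto
    show ?thesis
    proof (rule less.hyps[OF lt a(2)])
      show "z - {a} \<subseteq> x" using less.prems(2) by blast
      show "\<not> z - {a} \<subseteq> y" using False .
    qed
  qed
qed

lemma res_conn:
  assumes "stable C" "finite x" "x \<in> configs C"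
  shows "connected_cs (x \<odot> C)"
  unfolding connected_cs_def
proof (intro ballI impI)
  fix w assume w: "w \<in> configs (x \<odot> C)" "w \<noteq> {}"
  let ?y = "sdf w x"
  have y: "?y \<in> configs C" using w mem_res by blast
  have I: "x \<inter> ?y \<in> configs C"
    by (rule int_use[OF assms(1,3) y])
  show "\<exists>a\<in>w. w - {a} \<in> configs (x \<odot> C)"
  proof (cases "?y - x = {}")
    case False
    have "?y - (x \<inter> ?y) \<noteq> {}" using False by blast
    then obtain e where e: "e \<in> ?y - (x \<inter> ?y)" "?y - {e} \<in> configs C"
      using remove_lemma[OF assms(1) _ I _ y, of ?y] assms(2) y by blast
    have "sdf (w - {e}) x = ?y - {e}" using e(1) unfolding sdf_def by blast
    moreover have "e \<in> w" using e(1) unfolding sdf_def by blast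
    ultimately show ?thesis using e(2) mem_res by metis
  next
    case True
    have "\<not> x \<subseteq> ?y" using True w(2) unfolding sdf_def by blast
    then obtain e where e: "e \<in> x - ?y" "insert e ?y \<in> configs C"
      using add_lemma[OF assms(1,2,3) _ y, of x] True assms(3) by blast
    have "sdf (w - {e}) x = insert e ?y" using e(1) unfolding sdf_def by blast
    moreover have "e \<in> w" using e(1) unfolding sdf_def by blast
    ultimately show ?thesis using e(2) mem_res by metis
  qed
qed

lemma res_stable:
  assumes "stable C" "finite x" "x \<in> configs C"
  shows "stable (x \<odot> C)"
proof -
  have "rooted (x \<odot> C)" unfolding rooted_def mem_res sdf_def using assms(3) by simp
  moreover have "closed_intersection (x \<odot> C)"
    unfolding closed_intersection_def using res_inter[OF assms(1,3)] by blast
  moreover have "closed_bounded_union (x \<odot> C)"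
    unfolding closed_bounded_union_def using res_bunion[OF assms(1,3)] by blast
  moreover have "coherent (x \<odot> C)"
    unfolding coherent_def using res_coh[OF assms(1,3)] by blast
  ultimately show ?thesis using res_conn[OF assms] unfolding stable_def by blast
qed

theorem mainTheorem5:
  fixes C :: "'a cs"
  assumes "conf_struct C"
    and "countable (events C)"
    and "stable C"
  shows "(\<forall>x\<in>configs C. finite x \<longrightarrow> conf_struct (x \<odot> C) \<and> stable (x \<odot> C))
    \<and> {} \<odot> C = C
    \<and> (\<forall>x\<in>configs C. finite x \<longrightarrow>
         (\<forall>y\<in>configs (x \<odot> C). finite y \<longrightarrow>
            (y - x \<union> (x - y)) \<in> configs C \<and> finite (y - x \<union> (x - y))
            \<and> y \<odot> (x \<odot> C) = (y - x \<union> (x - y)) \<odot> C))"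
proof (intro conjI ballI impI)
  fix x assume x: "x \<in> configs C" "finite x"
  show "stable (x \<odot> C)" using res_stable[OF assms(3) x(2,1)] .
  show "conf_struct (x \<odot> C)"
    using assms(1) x(1) unfolding conf_struct_def ev_res cfg_res sdf_def by blast
next
  show "{} \<odot> C = C" by (simp add: sym_residual_def events_def configs_def)
next
  fix x y assume x: "x \<in> configs C" "finite x" and y: "y \<in> configs (x \<odot> C)" "finite y"
  show "y - x \<union> (x - y) \<in> configs C" using y(1) mem_res unfolding sdf_def by metis
  show "finite (y - x \<union> (x - y))" using x y by blast
  show "y \<odot> (x \<odot> C) = (y - x \<union> (x - y)) \<odot> C"
  proof -
    have e1: "events (y \<odot> (x \<odot> C)) = events (sdf y x \<odot> C)" by (simp add: ev_res)
    have pw: "\<And>w. sdf (sdf w x) y = sdf w (sdf y x)" unfolding sdf_def by blast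
    have c1: "configs (y \<odot> (x \<odot> C)) = configs (sdf y x \<odot> C)"
      unfolding cfg_res image_image pw by (rule refl)
    have "y \<odot> (x \<odot> C) = sdf y x \<odot> C"
      using e1 c1 unfolding events_def configs_def by (rule prod_eqI)
    then show ?thesis by (simp add: sdf_def)
  qed
qed

end
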